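(* Under the standing assumptions below, let $k\in P$ and $x\in M_k$, and let $p:M\to\bigoplus_{i\in P}M_{\langle i\rangle}$ be any graded $R[U_0]$-homomorphism with $q\circ p=\mathrm{id}_M$. Then $x$ is decomposable (i.e. $x\in D_k$) if and only if $p(x)=\ell_1+\dots+\ell_r$ with $0\neq \ell_j\in M_{\langle s_j\rangle}$ and $s_j<k$ for all $j$ (that is, every nonzero component of $p(x)$ lies in a summand $M_{\langle s\rangle}$ with $s<k$).
   Context: Standing assumptions: $R$ is a principal ideal domain; $P$ is a lattice with a compatible abelian group structure ($(P,+,0)$ abelian group, $a\le b\Rightarrow a+c\le b+c$). $U_0=\{s\in P:s\ge 0\}$, $R[U_0]$ the monoid ring (finite sums $\sum c_st^s$, $c_s\in R$), graded by $\deg(ct^s)=s$. $M=\bigoplus_{a\in P}M_a$ is a $P$-graded $R[U_0]$-module that is graded projective, with each $M_a$ a finitely generated (hence free) $R$-module. For $r\in P$, $D_r=\sum_{q<r}t^{\,r-q}M_q\subseteq M_r$; $x\in M_r$ is decomposable if $x\in D_r$. For each $i\in P$, fix an $R$-basis $\{m_j\}$ of $M_i$ and let $M_{\langle i\rangle}$ be the graded free $R[U_0]$-module with homogeneous basis $\{\widetilde m_j\}$, all of degree $i$. Let $q:\bigoplus_{i\in P}M_{\langle i\rangle}\to M$ be the graded homomorphism whose restriction to $M_{\langle i\rangle}$ sends $t^{s}\sum_j c_j\widetilde m_j\mapsto t^s\sum_jc_jm_j$ ($c_j\in R$); $q$ is surjective, so by projectivity there is a graded homomorphism $p$ with $q\circ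 p=\mathrm{id}_M$. All homomorphisms are degree-preserving. *)

theory Defs
  imports Complex_Main
begin

definition is_pid :: "'r::idom itself \<Rightarrow> bool" where
  "is_pid _ \<longleftrightarrow>
     (\<forall>I::'r set. (0 \<in> I \<and> (\<forall>x\<in>I. \<forall>y\<in>I. x + y \<in> I) \<and> (\<forall>a. \<forall>x\<in>I. a * x \<in> I))
        \<longrightarrow> (\<exists>g. I = {g * a | a. True}))"

text \<open>The R[U_0]-action is given
  by the R-scalar multiplication smul and the action tm s of the monomials t^s (s >= 0);
  Mc a is the homogeneous component M_a, and M is the internal direct sum of the M_a.\<close>
definition graded_RU0_module ::
  "('r::idom \<Rightarrow> 'm::ab_group_add \<Rightarrow> 'm) \<Rightarrow> ('p::{ordered_ab_group_add,lattice} \<Rightarrow> 'm \<Rightarrow> 'm)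
     \<Rightarrow> ('p \<Rightarrow> 'm set) \<Rightarrow> bool" where
  "graded_RU0_module smul tm Mc \<longleftrightarrow>
     module smul \<and>
     (\<forall>x. tm 0 x = x) \<and>
     (\<forall>s u x. 0 \<le> s \<longrightarrow> 0 \<le> u \<longrightarrow> tm (s + u) x = tm s (tm u x)) \<and>
     (\<forall>s x y. 0 \<le> s \<longrightarrow> tm s (x + y) = tm s x + tm s y) \<and>
     (\<forall>s c x. 0 \<le> s \<longrightarrow> tm s (smul c x) = smul c (tm s x)) \<and>
     (\<forall>a. module.subspace smul (Mc a)) \<and>
     (\<forall>a s x. 0 \<le> s \<longrightarrow> x \<in> Mc a \<longrightarrow> tm s x \<in> Mc (a + s)) \<and>
     (\<forall>x. \<exists>A f. finite A \<and> (\<forall>a\<in>A. f a \<in> Mc a) \<and> x = (\<Sum>a\<in>A. f a)) \<and>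
     (\<forall>A f. finite A \<longrightarrow> (\<forall>a\<in>A. f a \<in> Mc a) \<longrightarrow> (\<Sum>a\<in>A. f a) = 0 \<longrightarrow> (\<forall>a\<in>A. f a = 0))"

text \<open>Elements of the graded free module F = (direct sum over i of M_<i>), where M_<i> has
  homogeneous basis (tilde b) for b in the fixed R-basis bas i of M_i, all of degree i.
  An element c is represented by its R-coefficients: c i b s is the coefficient of
  t^s (tilde b) in the summand M_<i> (b \<in> bas i, s \<ge> 0); this has degree i + s.\<close>
definition free_elem :: "('p::ordered_ab_group_add \<Rightarrow> 'm set) \<Rightarrow> ('p \<Rightarrow> 'm \<Rightarrow> 'p \<Rightarrow> 'r::zero) \<Rightarrow> bool" where
  "free_elem bas c \<longleftrightarrow>
     finite {(i, b, s). c i b s \<noteq> 0} \<and> (\<forall>i b s. c i b s \<noteq> 0 \<longrightarrow> b \<in> bas i \<and> 0 \<le> s)"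

definition free_hom_deg :: "('p::ordered_ab_group_add \<Rightarrow> 'm set) \<Rightarrow> 'p \<Rightarrow> ('p \<Rightarrow> 'm \<Rightarrow> 'p \<Rightarrow> 'r::zero) \<Rightarrow> bool" where
  "free_hom_deg bas d c \<longleftrightarrow> free_elem bas c \<and> (\<forall>i b s. c i b s \<noteq> 0 \<longrightarrow> i + s = d)"

definition free_shift :: "'p::ordered_ab_group_add \<Rightarrow> ('p \<Rightarrow> 'm \<Rightarrow> 'p \<Rightarrow> 'r::zero) \<Rightarrow> ('p \<Rightarrow> 'm \<Rightarrow> 'p \<Rightarrow> 'r)" where
  "free_shift s c = (\<lambda>i b u. if s \<le> u then c i b (u - s) else 0)"

definition qmap :: "('r::idom \<Rightarrow> 'm::ab_group_add \<Rightarrow> 'm) \<Rightarrow> ('p \<Rightarrow> 'm \<Rightarrow> 'm)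
     \<Rightarrow> ('p \<Rightarrow> 'm \<Rightarrow> 'p \<Rightarrow> 'r) \<Rightarrow> 'm" where
  "qmap smul tm c = (\<Sum>(i, b, s) \<in> {(i, b, s). c i b s \<noteq> 0}. smul (c i b s) (tm s b))"

definition graded_hom_to_free ::
  "('r::idom \<Rightarrow> 'm::ab_group_add \<Rightarrow> 'm) \<Rightarrow> ('p::ordered_ab_group_add \<Rightarrow> 'm \<Rightarrow> 'm) \<Rightarrow> ('p \<Rightarrow> 'm set)
     \<Rightarrow> ('p \<Rightarrow> 'm set) \<Rightarrow> ('m \<Rightarrow> 'p \<Rightarrow> 'm \<Rightarrow> 'p \<Rightarrow> 'r) \<Rightarrow> bool" where
  "graded_hom_to_free smul tm Mc bas p \<longleftrightarrow>
     (\<forall>x. free_elem bas (p x)) \<and>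
     (\<forall>a x. x \<in> Mc a \<longrightarrow> free_hom_deg bas a (p x)) \<and>
     (\<forall>x y. p (x + y) = (\<lambda>i b s. p x i b s + p y i b s)) \<and>
     (\<forall>c x. p (smul c x) = (\<lambda>i b s. c * p x i b s)) \<and>
     (\<forall>s x. 0 \<le> s \<longrightarrow> p (tm s x) = free_shift s (p x))"

definition decomp_set :: "('p::ordered_ab_group_add \<Rightarrow> 'm::ab_group_add \<Rightarrow> 'm) \<Rightarrow> ('p \<Rightarrow> 'm set) \<Rightarrow> 'p \<Rightarrow> 'm set" where
  "decomp_set tm Mc r =
     {(\<Sum>q\<in>A. tm (r - q) (y q)) | A y. finite A \<and> (\<forall>q\<in>A. q < r \<and> y q \<in> Mc q)}"

end

theory Submission
  imports Defs
begin

lemma p_zero: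
  fixes p :: "'m::monoid_add \<Rightarrow> 'i \<Rightarrow> 'b \<Rightarrow> 's \<Rightarrow> 'r::ab_group_add"
  assumes add: "\<forall>x y. p (x + y) = (\<lambda>i b s. p x i b s + p y i b s)"
  shows "p 0 i b s = (0::'r::ab_group_add)"
proof -
  have "p (0 + 0) i b s = p 0 i b s + p 0 i b s" using add by metis
  then show ?thesis by simp
qed

lemma p_sum:
  fixes p :: "'m::comm_monoid_add \<Rightarrow> 'i \<Rightarrow> 'b \<Rightarrow> 's \<Rightarrow> 'r::ab_group_add"
  assumes add: "\<forall>x y. p (x + y) = (\<lambda>i b s. p x i b s + p y i b s)"
    and "finite A"
  shows "p (sum g A) i b s = (\<Sum>q\<in>A. p (g q) i b s)"
  using assms(2)
proof (induction A rule: finite_induct)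
  case empty
  then show ?case using p_zero[OF add] by simp
next
  case (insert a A)
  then show ?case using add by simp
qed

lemma tm_zero:
  fixes tm :: "'m::ab_group_add \<Rightarrow> 'm"
  assumes "\<forall>x y. tm (x + y) = tm x + tm y"
  shows "tm 0 = 0"
proof -
  have "tm (0+0) = tm 0 + tm 0" using assms by metis
  then show ?thesis by simp
qed

lemma tm_sum:
  fixes tm :: "'m::ab_group_add \<Rightarrow> 'm"
  assumes add: "\<forall>x y. tm (x + y) = tm x + tm y"
    and "finite A"
  shows "tm (sum g A) = (\<Sum>q\<in>A. tm (g q))"
  using assms(2)
proof (induction A rule: finite_induct)
  case empty
  then show ?case using tm_zero[OF add] by simp
next
  case (insert a A)
  then show ?case using add by simp
qed

theorem lemma4p3:
  fixes smul :: "'r::idom \<Rightarrow> 'm::ab_group_add \<Rightarrow> 'm"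
    and tm :: "'p::{ordered_ab_group_add,lattice} \<Rightarrow> 'm \<Rightarrow> 'm"
    and Mc :: "'p \<Rightarrow> 'm set"
    and bas :: "'p \<Rightarrow> 'm set"
    and p :: "'m \<Rightarrow> 'p \<Rightarrow> 'm \<Rightarrow> 'p \<Rightarrow> 'r"
    and k :: 'p and x :: 'm
  assumes "is_pid TYPE('r)"
    and "graded_RU0_module smul tm Mc"
    and "\<forall>i. finite (bas i) \<and> \<not> module.dependent smul (bas i) \<and> module.span smul (bas i) = Mc i"
    and "graded_hom_to_free smul tm Mc bas p"
    and "\<forall>y. qmap smul tm (p y) = y"
    and "x \<in> Mc k"
  shows "x \<in> decomp_set tm Mc k \<longleftrightarrow> (\<forall>i. p x i \<noteq> (\<lambda>b s. 0) \<longrightarrow> i < k)"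
proof
  have padd: "\<forall>x y. p (x + y) = (\<lambda>i b s. p x i b s + p y i b s)"
    using assms(4) unfolding graded_hom_to_free_def by blast
  have pshift: "\<And>s x. 0 \<le> s \<Longrightarrow> p (tm s x) = free_shift s (p x)"
    using assms(4) unfolding graded_hom_to_free_def by blast
  have phom: "\<And>a x. x \<in> Mc a \<Longrightarrow> free_hom_deg bas a (p x)"
    using assms(4) unfolding graded_hom_to_free_def by blast
  assume "x \<in> decomp_set tm Mc k"
  then obtain A y where A: "finite A" "\<forall>q\<in>A. q < k \<and> y q \<in> Mc q"
    and xe: "x = (\<Sum>q\<in>A. tm (k - q) (y q))"
    unfolding decomp_set_def by blast
  show "\<forall>i. p x i \<noteq> (\<lambda>b s. 0) \<longrightarrow> i < k"
  proof (intro allI impI)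
    fix i assume "p x i \<noteq> (\<lambda>b s. 0)"
    then have "\<not> (\<forall>b s. p x i b s = 0)" by (auto intro!: ext)
    then obtain b s where nz: "p x i b s \<noteq> 0" by blast
    have "p x i b s = (\<Sum>q\<in>A. p (tm (k - q) (y q)) i b s)"
      unfolding xe by (rule p_sum[OF padd A(1)])
    have "\<exists>q\<in>A. p (tm (k - q) (y q)) i b s \<noteq> 0"
    proof (rule ccontr)
      assume "\<not> (\<exists>q\<in>A. p (tm (k - q) (y q)) i b s \<noteq> 0)"
      then have "(\<Sum>q\<in>A. p (tm (k - q) (y q)) i b s) = 0" by simp
      then show False using nz \<open>p x i b s = _\<close> by simp
    qed
    then obtain q where q: "q \<in> A" "p (tm (k - q) (y q)) i b s \<noteq> 0" by blast
    have qk: "q < k" "y q \<in> Mc q" using A(2) q(1) by auto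
    have "0 \<le> k - q" using qk by simp
    then have "free_shift (k - q) (p (y q)) i b s \<noteq> 0" using q(2) pshift by metis
    then have nz2: "p (y q) i b (s - (k - q)) \<noteq> 0" unfolding free_shift_def by (auto split: if_splits)
    have "free_hom_deg bas q (p (y q))" using phom qk by blast
    then have "i + (s - (k - q)) = q" "0 \<le> s - (k - q)"
      using nz2 unfolding free_hom_deg_def free_elem_def by blast+
    from this(2) have "i + 0 \<le> i + (s - (k - q))" by (intro add_left_mono)
    then have "i \<le> q" using \<open>i + (s - (k - q)) = q\<close> by simp
    then show "i < k" using qk by simp
  qed
next
  have mod: "module smul" and sub: "\<And>a. module.subspace smul (Mc a)"
    and tmadd: "\<And>s. 0 \<le> s \<Longrightarrow> \<forall>x y. tm s (x + y) = tm s x + tm s y"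
    and tmsm: "\<And>s c x. 0 \<le> s \<Longrightarrow> tm s (smul c x) = smul c (tm s x)"
    using assms(2) unfolding graded_RU0_module_def by auto
  have tmadd': "\<And>s. 0 \<le> s \<Longrightarrow> \<forall>x y. tm s (x + y) = (tm s x + tm s y)"
    using tmadd by blast
  have phom: "free_hom_deg bas k (p x)"
    using assms(4,6) unfolding graded_hom_to_free_def by blast
  define c where "c = p x"
  define S where "S = {(i, b, s). c i b s \<noteq> 0}"
  have finS: "finite S" using phom unfolding S_def c_def free_hom_deg_def free_elem_def by blast
  have Sprop: "\<And>i b s. (i, b, s) \<in> S \<Longrightarrow> b \<in> bas i \<and> 0 \<le> s \<and> i + s = k"
    using phom unfolding S_def c_def free_hom_deg_def free_elem_def by blast
  have basM: "\<And>i b. b \<in> bas i \<Longrightarrow> b \<in> Mc i"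
    using assms(3) module.span_base[OF mod] by metis
  assume H: "\<forall>i. p x i \<noteq> (\<lambda>b s. 0) \<longrightarrow> i < k"
  have Sk: "\<And>z. z \<in> S \<Longrightarrow> fst z < k"
  proof -
    fix z assume "z \<in> S"
    then obtain i b s where z: "z = (i, b, s)" "c i b s \<noteq> 0" unfolding S_def by auto
    have "p x i \<noteq> (\<lambda>b s. 0)"
    proof
      assume "p x i = (\<lambda>b s. 0)"
      then have "c i b s = 0" by (simp add: c_def)
      then show False using z by simp
    qed
    then show "fst z < k" using H z by simp
  qed
  have x1: "x = (\<Sum>(i, b, s) \<in> S. smul (c i b s) (tm s b))"
    using assms(5) unfolding qmap_def S_def c_def by simp
  define y where "y i = (\<Sum>z \<in> {z\<in>S. fst z = i}. smul (c (fst z) (fst (snd z)) (snd (snd z))) (fst (snd z)))" for i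
  define f where "f z = smul (c (fst z) (fst (snd z)) (snd (snd z))) (tm (snd (snd z)) (fst (snd z)))" for z
  have "x = sum f S" unfolding x1 f_def by (simp add: case_prod_beta)
  also have "\<dots> = (\<Sum>i\<in>fst ` S. sum f {z\<in>S. fst z = i})"
    using sum.image_gen[OF finS, of f fst] .
  also have "\<dots> = (\<Sum>i\<in>fst ` S. tm (k - i) (y i))"
  proof (rule sum.cong[OF refl])
    fix i assume i: "i \<in> fst ` S"
    then have "i < k" using Sk by auto
    then have ge: "0 \<le> k - i" by simp
    have "tm (k - i) (y i) = (\<Sum>z \<in> {z\<in>S. fst z = i}. tm (k - i) (smul (c (fst z) (fst (snd z)) (snd (snd z))) (fst (snd z))))"
      unfolding y_def by (rule tm_sum[OF tmadd'[OF ge]]) (simp add: finS)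
    also have "\<dots> = sum f {z\<in>S. fst z = i}"
    proof (rule sum.cong[OF refl])
      fix z assume z: "z \<in> {z\<in>S. fst z = i}"
      obtain a b s where zz: "z = (a, b, s)" by (cases z)
      have "a = i" "0 \<le> s" "a + s = k" using Sprop z zz by auto
      then have "s = k - i" by (metis add_diff_cancel_left')
      then show "tm (k - i) (smul (c (fst z) (fst (snd z)) (snd (snd z))) (fst (snd z))) = f z"
        unfolding f_def zz using tmsm ge by simp
    qed
    finally show "sum f {z\<in>S. fst z = i} = tm (k - i) (y i)" by simp
  qed
  finally have xe: "x = (\<Sum>i\<in>fst ` S. tm (k - i) (y i))" .
  have "\<forall>q\<in>fst ` S. q < k \<and> y q \<in> Mc q"
  proof
    fix q assume q: "q \<in> fst ` S"
    have "y q \<in> Mc q" unfolding y_def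
    proof (rule module.subspace_sum[OF mod sub])
      fix z assume z: "z \<in> {z\<in>S. fst z = q}"
      obtain a b s where zz: "z = (a, b, s)" by (cases z)
      have "b \<in> Mc q" using Sprop z zz basM by auto
      then show "smul (c (fst z) (fst (snd z)) (snd (snd z))) (fst (snd z)) \<in> Mc q"
        using module.subspace_scale[OF mod sub] zz by simp
    qed
    then show "q < k \<and> y q \<in> Mc q" using q Sk by auto
  qed
  then show "x \<in> decomp_set tm Mc k" unfolding decomp_set_def using xe finS by blast
qed

end
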